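(* Let $G=(V,E)$ be a finite graph with boundary $B\subseteq V$, $|B|\ge2$, such that $B$ is an independent set of $G$. Let $d_1\le d_2\le\cdots\le d_{|B|}$ be the degrees (in $G$) of the boundary vertices, sorted in non-decreasing order. Then $$\sigma_k(G,B)\le d_k,\qquad k=1,2,\ldots,|B|.$$
   Context: $G=(V,E)$ is a finite undirected graph. A boundary is a subset $B\subseteq V$ with $|B|\ge2$. For $f:V\to\mathbb{R}$, $f\neq0$, the Rayleigh quotient is $R(f)=\frac{\sum_{\{x,y\}\in E}(f(x)-f(y))^2}{\sum_{x\in B}f(x)^2}$, interpreted as $+\infty$ if $f$ vanishes on $B$. For $1\le k\le|B|$, the $k$-th Steklov eigenvalue is $\sigma_k(G,B)=\min_{W\subseteq\mathbb{R}^V,\dim W=k}\max_{0\ne f\in W}R(f)$. *)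

theory Defs
  imports "HOL-Analysis.Analysis" "HOL-Library.Multiset" "HOL-Library.Extended_Real"
begin

text \<open>A finite simple undirected graph: the vertex set is the finite type 'n,
  the edges are given by a symmetric irreflexive adjacency relation E.
  Functions f : V -> R are vectors in real ^ 'n.\<close>

definition graph_energy :: "('n::finite \<Rightarrow> 'n \<Rightarrow> bool) \<Rightarrow> real ^ 'n \<Rightarrow> real" where
  "graph_energy E f =
     (\<Sum>p\<in>{(x, y). E x y}. (f $ fst p - f $ snd p)\<^sup>2) / 2"
  \<comment> \<open>sum over unordered edges {x,y}: each edge appears as two ordered pairs\<close>

definition rayleigh :: "('n::finite \<Rightarrow> 'n \<Rightarrow> bool) \<Rightarrow> 'n set \<Rightarrow> real ^ 'n \<Rightarrow> ereal" where
  "rayleigh E B f =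
     (if (\<Sum>x\<in>B. (f $ x)\<^sup>2) = 0 then \<infinity>
      else ereal (graph_energy E f / (\<Sum>x\<in>B. (f $ x)\<^sup>2)))"

definition steklov :: "('n::finite \<Rightarrow> 'n \<Rightarrow> bool) \<Rightarrow> 'n set \<Rightarrow> nat \<Rightarrow> ereal" where
  "steklov E B k =
     (INF W\<in>{W :: (real ^ 'n) set. subspace W \<and> dim W = k}.
        (SUP f\<in>W - {0}. rayleigh E B f))"

definition degree :: "('n::finite \<Rightarrow> 'n \<Rightarrow> bool) \<Rightarrow> 'n \<Rightarrow> nat" where
  "degree E x = card {y. E x y}"

definition boundary_degrees :: "('n::finite \<Rightarrow> 'n \<Rightarrow> bool) \<Rightarrow> 'n set \<Rightarrow> nat list" where
  "boundary_degrees E B = sorted_list_of_multiset (image_mset (degree E) (mset_set B))"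

end

theory Submission
  imports Defs
begin

lemma many_small:
  fixes E :: "'n::finite \<Rightarrow> 'n \<Rightarrow> bool" and B :: "'n set"
  assumes "1 \<le> k" "k \<le> card B"
  shows "k \<le> card {x\<in>B. degree E x \<le> boundary_degrees E B ! (k - 1)}"
proof -
  define M where "M = image_mset (degree E) (mset_set B)"
  define L where "L = sorted_list_of_multiset M"
  define d where "d = L ! (k - 1)"
  have len: "length L = card B"
  proof -
    have "length L = size (mset L)" by simp
    also have "mset L = M" unfolding L_def by simp
    finally show ?thesis unfolding M_def by simp
  qed
  have srt: "sorted L" unfolding L_def by simp
  have le: "\<forall>v\<in>set (take k L). v \<le> d"
  proof
    fix v assume "v \<in> set (take k L)"
    then obtain i where i: "i < length (take k L)" "v = take k L ! i"
      by (metis in_set_conv_nth)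
    then have "i \<le> k - 1" "k - 1 < length L" using assms len by auto
    then show "v \<le> d" using i srt unfolding d_def by (simp add: sorted_nth_mono)
  qed
  have sub: "mset (take k L) \<subseteq># mset L"
  proof -
    have "mset L = mset (take k L) + mset (drop k L)"
      by (simp flip: mset_append)
    then show ?thesis by simp
  qed
  have "mset (take k L) = filter_mset (\<lambda>v. v \<le> d) (mset (take k L))"
  proof -
    have "filter_mset (\<lambda>v. v \<le> d) (mset (take k L)) = filter_mset (\<lambda>v. True) (mset (take k L))"
      by (rule filter_mset_cong) (use le in auto)
    then show ?thesis by simp
  qed
  also have "\<dots> \<subseteq># filter_mset (\<lambda>v. v \<le> d) M"
    using sub unfolding L_def by (simp add: multiset_filter_mono)
  also have "filter_mset (\<lambda>v. v \<le> d) M = image_mset (degree E) (mset_set {x\<in>B. degree E x \<le> d})"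
    unfolding M_def by (simp add: image_mset_filter_mset_swap[symmetric])
  finally have "size (mset (take k L)) \<le> card {x\<in>B. degree E x \<le> d}"
    using size_mset_mono by fastforce
  then show ?thesis using assms len unfolding d_def L_def M_def boundary_degrees_def by simp
qed


theorem mainTheorem5:
  fixes E :: "'n::finite \<Rightarrow> 'n \<Rightarrow> bool" and B :: "'n set" and k :: nat
  assumes "symp E" and "irreflp E"
    and "card B \<ge> 2"
    and "\<forall>x\<in>B. \<forall>y\<in>B. \<not> E x y"
    and "1 \<le> k" and "k \<le> card B"
  shows "steklov E B k \<le> ereal (real (boundary_degrees E B ! (k - 1)))"
proof -
  define d where "d = boundary_degrees E B ! (k - 1)"
  have "k \<le> card {x\<in>B. degree E x \<le> d}" using many_small assms(5,6) d_def by blast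
  then obtain S where S: "S \<subseteq> {x\<in>B. degree E x \<le> d}" "card S = k"
    by (meson obtain_subset_with_card_n)
  define W where "W = span ((\<lambda>x. axis x (1::real)) ` S :: (real^'n) set)"
  have ind: "independent ((\<lambda>x. axis x (1::real)) ` S :: (real^'n) set)"
    by (rule independent_mono[OF independent_Basis]) auto
  have inj: "inj_on (\<lambda>x. axis x (1::real) :: real^'n) S"
    by (auto simp: inj_on_def axis_eq_axis)
  have dimW: "dim W = k" unfolding W_def
    using dim_span_eq_card_independent[OF ind] card_image[OF inj] S(2) by simp
  have subW: "subspace W" unfolding W_def by simp
  have supp: "\<forall>y. y \<notin> S \<longrightarrow> f $ y = 0" if "f \<in> W" for f
  proof -
    have "subspace {f :: real^'n. \<forall>y. y \<notin> S \<longrightarrow> f $ y = 0}"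
      by (auto simp: subspace_def)
    moreover have "(\<lambda>x. axis x (1::real)) ` S \<subseteq> {f :: real^'n. \<forall>y. y \<notin> S \<longrightarrow> f $ y = 0}"
      by (auto simp: axis_def)
    ultimately have "W \<subseteq> {f :: real^'n. \<forall>y. y \<notin> S \<longrightarrow> f $ y = 0}"
      unfolding W_def by (intro span_minimal)
    then show ?thesis using that by blast
  qed
  have bound: "rayleigh E B f \<le> ereal (real d)" if fW: "f \<in> W - {0}" for f
  proof -
    have fS: "\<And>y. y \<notin> S \<Longrightarrow> f $ y = 0" using supp fW by blast
    have SB: "S \<subseteq> B" using S by auto
    have sumB: "(\<Sum>x\<in>B. (f $ x)\<^sup>2) = (\<Sum>x\<in>S. (f $ x)\<^sup>2)"
      by (rule sum.mono_neutral_right) (use SB fS in auto)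
    obtain z where z: "f $ z \<noteq> 0" using fW by (metis DiffE insertI1 vec_eq_iff zero_index)
    have zS: "z \<in> S" using z fS by blast
    have pos: "(\<Sum>x\<in>S. (f $ x)\<^sup>2) > 0"
      by (rule sum_pos2[OF finite zS]) (use z in auto)
    have prod0: "f $ x * f $ y = 0" if "E x y" for x y
    proof (cases "x \<in> S")
      case True
      then have "y \<notin> S" using assms(4) SB that by blast
      then show ?thesis using fS by simp
    qed (use fS in simp)
    define P where "P = {(x, y). E x y}"
    have "(\<Sum>p\<in>P. (f $ fst p - f $ snd p)\<^sup>2)
        = (\<Sum>p\<in>P. (f $ fst p)\<^sup>2) + (\<Sum>p\<in>P. (f $ snd p)\<^sup>2)"
      unfolding sum.distrib[symmetric]
    proof (rule sum.cong)
      fix p assume "p \<in> P"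
      then have "f $ fst p * f $ snd p = 0" using prod0[of "fst p" "snd p"] by (auto simp: P_def)
      then show "(f $ fst p - f $ snd p)\<^sup>2 = (f $ fst p)\<^sup>2 + (f $ snd p)\<^sup>2"
        by (simp add: power2_diff)
    qed simp
    also have "(\<Sum>p\<in>P. (f $ snd p)\<^sup>2) = (\<Sum>p\<in>P. (f $ fst p)\<^sup>2)"
    proof -
      have "prod.swap ` P = P" using assms(1) by (auto simp: P_def symp_def image_iff)
      then have "(\<Sum>p\<in>P. (f $ fst p)\<^sup>2) = (\<Sum>p\<in>prod.swap ` P. (f $ fst p)\<^sup>2)" by simp
      also have "\<dots> = (\<Sum>p\<in>P. (f $ snd p)\<^sup>2)"
        by (subst sum.reindex) (auto simp: inj_on_def)
      finally show ?thesis by simp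
    qed
    also have "(\<Sum>p\<in>P. (f $ fst p)\<^sup>2) = (\<Sum>x\<in>UNIV. (f $ x)\<^sup>2 * real (degree E x))"
    proof -
      have PS: "P = Sigma UNIV (\<lambda>x. {y. E x y})" by (auto simp: P_def)
      have s1: "(\<Sum>x\<in>UNIV. \<Sum>y\<in>{y. E x y}. (f $ x)\<^sup>2) = (\<Sum>(x,y)\<in>Sigma UNIV (\<lambda>x. {y. E x y}). (f $ x)\<^sup>2)"
        by (rule sum.Sigma) auto
      have s2: "(\<Sum>(x,y)\<in>Sigma UNIV (\<lambda>x. {y. E x y}). (f $ x)\<^sup>2) = (\<Sum>p\<in>Sigma UNIV (\<lambda>x. {y. E x y}). (f $ fst p)\<^sup>2)"
        by (simp add: case_prod_unfold)
      have "(\<Sum>p\<in>P. (f $ fst p)\<^sup>2) = (\<Sum>x\<in>UNIV. \<Sum>y\<in>{y. E x y}. (f $ x)\<^sup>2)"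
        using s1 s2 PS by simp
      then show ?thesis by (simp add: degree_def mult.commute)
    qed
    also have "\<dots> = (\<Sum>x\<in>S. (f $ x)\<^sup>2 * real (degree E x))"
      by (rule sum.mono_neutral_right) (use fS in auto)
    also have "\<dots> \<le> (\<Sum>x\<in>S. (f $ x)\<^sup>2 * real d)"
      by (rule sum_mono) (use S in \<open>auto intro!: mult_left_mono\<close>)
    finally have en: "graph_energy E f \<le> real d * (\<Sum>x\<in>S. (f $ x)\<^sup>2)"
      unfolding graph_energy_def P_def by (simp add: sum_distrib_left mult.commute)
    show ?thesis unfolding rayleigh_def sumB using pos en
      by (simp add: pos_divide_le_eq)
  qed
  have "steklov E B k \<le> (SUP f\<in>W - {0}. rayleigh E B f)"
    unfolding steklov_def by (rule INF_lower) (use subW dimW in auto)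
  also have "\<dots> \<le> ereal (real d)" by (rule SUP_least) (use bound in auto)
  finally show ?thesis unfolding d_def .
qed

end
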